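(* Assume the standing hypotheses (H). There is a nonnegative $K_4\in L^2_{\mathfrak P}$ such that for every $(t,\mathbf x,y)\in\mathbf D\times\mathbb R$, $\boldsymbol\upsilon\in\mathbb R^2$, $\boldsymbol\zeta\in\mathbf Z$ and $\psi>0$, $$H^\psi_4(t,\mathbf x,y;\boldsymbol\upsilon,\boldsymbol\zeta)\ge U''(y)K_4(t,\mathbf x)\psi^2.$$
   Context: Setting. Fix $T>0$, $S_0>0$, $\Sigma_0>0$, $A_0\in\mathbb R$. $\Omega$: continuous paths $\omega=(\omega^S,\omega^\Sigma,\omega^A):[0,T]\to\mathbb R^3$ with $\omega_0=(S_0,\Sigma_0,A_0)$ (uniform topology, Borel $\sigma$-algebra $\mathcal F$); $S,\Sigma,A$ coordinate processes, $\mathbb F$ their raw filtration, $M_t=\sup_{u\le t}S_u$, $\mathbf X_t=(S_t,A_t,M_t,\Sigma_t)$. $\mathbf G=\mathbb R_+\times\mathbb R\times\mathbb R_+$, $\mathbf D^0=(0,T)\times\mathbf G\times\mathbb R_+$ (points $(t,\mathbf x)$, $\mathbf x=(S,A,M,\Sigma)$); $0<\underline\Sigma<\Sigma_0<\overline\Sigma$, $\mathbf D=(0,T)\times\mathbf G\times[\underline\Sigma,\overline\Sigma]$. $\|\cdot\|$ Euclidean norm, $\mathbf e_4$ fourth unit vector, $x^-=\max(-x,0)$. Call: $\mathcal C(t,S,\Sigma)$ with $\mathcal C_t+\frac12\Sigma^2S^2\mathcal C_{SS}=0$, $\mathcal C(T_{\mathsf C},S,\Sigma)=\mathsf C(S)$.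 $b^{\mathcal C}(t,\mathbf x;\boldsymbol\zeta)=\nu\mathcal C_\Sigma+\frac12S^2\mathcal C_{SS}(\sigma^2-\Sigma^2)+\sigma\eta S\mathcal C_{S\Sigma}+\frac12(\eta^2+\xi)\mathcal C_{\Sigma\Sigma}$ for $\boldsymbol\zeta=(\nu,\sigma,\eta,\xi)$. Models: $\mathfrak P^{00}$ = probability measures $P$ on $(\Omega,\mathcal F)$ with progressively measurable $\boldsymbol\zeta^P=(\nu^P,\sigma^P,\eta^P,\xi^P)$ such that $S$, $\Sigma-\int_0^\cdot\nu^P_tdt$ are continuous local $P$-martingales with $d\langle S\rangle_t=S_t^2(\sigma^P_t)^2dt$, $d\langle\Sigma\rangle_t=((\eta^P_t)^2+\xi^P_t)dt$, $d\langle S,\Sigma\rangle_t=S_t\sigma^P_t\eta^P_tdt$, $S,\Sigma>0$, $\xi^P\ge0$, $b^{\mathcal C}(t,\mathbf X_t;\boldsymbol\zeta^P_t)=0$ $dt\times P$-a.e.; for Borel $\alpha,\beta,\gamma,\delta:[0,T]\times\mathbb R^3\to\mathbb R$, $\mathfrak P^0$ = those $P$ with $dA_t=(\alpha+\frac12(\sigma^P_t)^2\beta)dt+\gamma dS_t+\delta dM_t$. $\boldsymbol\zeta^0(\Sigma)=(0,\Sigma,0,0)^\top$; reference model: $\boldsymbol\zeta^P_t=\boldsymbol\zeta^0(\Sigma_t)$ a.e. Non-traded option: $\mathcal V(\cdot,\Sigma)$ solves $\mathcal V_t+(\alpha+\frac12\beta\Sigma^2)\mathcal V_A+\frac12\Sigma^2S^2(\mathcal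 V_{SS}+2\gamma\mathcal V_{SA}+\gamma^2\mathcal V_{AA})=0$ on $(0,T)\times\mathbf G$, $\delta\mathcal V_A+\mathcal V_M=0$ on $\{S\ge M\}$, $\mathcal V(T,\cdot,\Sigma)=\mathsf V$. $\Delta=\mathcal V_S+\gamma\mathcal V_A$, $\Gamma=\mathcal V_{SS}+2\gamma\mathcal V_{SA}+\gamma^2\mathcal V_{AA}$, $\frac{\partial\Delta}{\partial\Sigma}:=\mathcal V_{S\Sigma}+\gamma\mathcal V_{A\Sigma}$. P&L: $V_t=\mathcal V(t,\mathbf X_t)$, $C_t=\mathcal C(t,S_t,\Sigma_t)$; strategies $\boldsymbol\upsilon=(\theta,\phi)$ real locally bounded progressive; $Y^{\boldsymbol\upsilon,P}_t=Y_0+V_0+\int_0^t\theta dS+\int_0^t\phi dC-V_t$. Preferences: $\Psi=\mathrm{diag}(\psi_\nu,\psi_\sigma,\psi_\eta,\psi_\xi)$, positive; a utility $U$, strategy set $\mathfrak Y$, model set $\mathfrak P\subset\mathfrak P^0$. Candidate control: $\mathbf c=(\mathcal C_\Sigma,\Sigma S^2\mathcal C_{SS},\Sigma S\mathcal C_{S\Sigma},\frac12\mathcal C_{\Sigma\Sigma})^\top$, $\mathbf v=(\mathcal V_\Sigma,\Sigma(\beta\mathcal V_A+S^2\Gamma),\Sigma S\frac{\partial\Delta}{\partial\Sigma},\frac12\mathcal V_{\Sigma\Sigma})^\top$; $\lambda=\frac{\mathbf c^\top\Psi\mathbf v}{\mathbf c^\top\Psi\mathbf c}$ if $\mathcal V_{\Sigma\Sigma}-\frac{\mathbf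 c^\top\Psi\mathbf v}{\mathbf c^\top\Psi\mathbf c}\mathcal C_{\Sigma\Sigma}\ge0$, else $\lambda=\frac{\mathbf c^\top\Psi\mathbf v-\frac14\mathcal C_{\Sigma\Sigma}\mathcal V_{\Sigma\Sigma}\psi_\xi}{\mathbf c^\top\Psi\mathbf c-\frac14\mathcal C_{\Sigma\Sigma}^2\psi_\xi}$; $\mu=\frac12(\mathcal V_{\Sigma\Sigma}-\lambda\mathcal C_{\Sigma\Sigma})^-$; $\widetilde{\boldsymbol\zeta}=\Psi(\mathbf v-\lambda\mathbf c+\mu\mathbf e_4)$; $\boldsymbol\zeta^\psi=\boldsymbol\zeta^0(\Sigma)+\widetilde{\boldsymbol\zeta}\mathbf 1_{\{\underline\Sigma<\Sigma<\overline\Sigma\}}\psi$; $\widetilde g=\mathbf v^\top\widetilde{\boldsymbol\zeta}$. Cash-equivalent PDE: for $\Sigma\in[\underline\Sigma,\overline\Sigma]$, $\widetilde w_t+(\alpha+\frac12\beta\Sigma^2)\widetilde w_A+\frac12\Sigma^2S^2(\widetilde w_{SS}+2\gamma\widetilde w_{SA}+\gamma^2\widetilde w_{AA})+\frac12\widetilde g(\cdot,\Sigma)=0$ on $(0,T)\times\mathbf G$, $\delta\widetilde w_A+\widetilde w_M=0$ on $\{S\ge M\}$, $\widetilde w(T,\cdot,\Sigma)=0$. $L^p_{\mathfrak P}$: Borel $K$ on $\mathbf D^0$ with $\sup_{P\in\mathfrak P}E^P[\int_0^T|K(t,\mathbf X_t)|^pdt]^{1/p}<\infty$. Candidate asymptotic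 model family: $(P^\psi)_{\psi\in(0,\psi_0)}\subset\mathfrak P$, $\psi_0\in(0,1)$, with $K_0\in L^4_{\mathfrak P}$ and $\|\boldsymbol\zeta^{P^\psi}_t-\boldsymbol\zeta^\psi(t,\mathbf X_t)\|\le K_0(t,\mathbf X_t)\psi^2$ $dt\times P^\psi$-a.e. Assumption (A): (a) $\exists K_{\mathfrak Y}$: $Y^{\boldsymbol\upsilon,P}>-K_{\mathfrak Y}$ $dt\times P$-a.e. for all $\boldsymbol\upsilon\in\mathfrak Y$, $P\in\mathfrak P$; (b) $\mathfrak P$ contains a candidate asymptotic model family and a reference model, and constants $\underline\nu<0<\overline\nu$, $0<\underline\sigma<\underline\Sigma$, $\overline\Sigma<\overline\sigma$, $\underline\eta<0<\overline\eta$, $\overline\xi>0$ bound $\nu^P,\sigma^P,\eta^P,\xi^P,\Sigma$ in $[\underline\nu,\overline\nu],[\underline\sigma,\overline\sigma],[\underline\eta,\overline\eta],[0,\overline\xi],[\underline\Sigma,\overline\Sigma]$ $dt\times P$-a.e. for all $P\in\mathfrak P$; (c) $T_{\mathsf C}\ge T$, $\mathcal C\in C^{1,2,2}((0,T_{\mathsf C})\times\mathbb R_+^2)\cap C([0,T_{\mathsf C}]\times\overline{\mathbb R}_+^2)$ solves the call PDE classically for $\Sigma\in[\underline\Sigma,\overline\Sigma]$, $\mathcal C_\Sigma\ne0$ and $|\mathcal C_{\Sigma\Sigma}|\le K_{\mathcal C}(|\mathcal C_\Sigma|+|S^2\mathcal C_{SS}|+|S\mathcal C_{S\Sigma}|)$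 on $(0,T)\times\mathbb R_+\times[\underline\Sigma,\overline\Sigma]$ with $K_{\mathcal C}\in L^2_{\mathfrak P}$; (d) $\mathcal V\in C^{1,2,2,1,2}(\mathbf D^0)\cap C(\overline{\mathbf D^0})$ solves the $\mathcal V$-PDE classically for $\Sigma\in[\underline\Sigma,\overline\Sigma]$, $|\mathcal V_\Sigma|,|\beta\mathcal V_A+S^2\Gamma|,|S\frac{\partial\Delta}{\partial\Sigma}|,|\mathcal V_{\Sigma\Sigma}|\le K_{\mathcal V}$ on $\mathbf D$; (e) $\widetilde w\in C^{1,2,2,1,2}(\mathbf D^0)\cap C(\overline{\mathbf D^0})$ solves the cash-equivalent PDE classically for $\Sigma\in[\underline\Sigma,\overline\Sigma]$, $0\le\widetilde w\le K_{\widetilde w}$ on $\mathbf D$, and $\widetilde w_\Sigma,S(\widetilde w_S+\gamma\widetilde w_A),\beta\widetilde w_A+S^2(\widetilde w_{SS}+2\gamma\widetilde w_{SA}+\gamma^2\widetilde w_{AA}),S(\widetilde w_{S\Sigma}+\gamma\widetilde w_{A\Sigma}),\widetilde w_{\Sigma\Sigma}\in L^4_{\mathfrak P}$; (f) $U\in C^3(\mathbb R)$, $U'>0$, $U''<0$, $-U''/U'$ nonincreasing. Additional notation. $\mathbf Z=[\underline\nu,\overline\nu]\times[\underline\sigma,\overline\sigma]\times[\underline\eta,\overline\eta]\times[0,\overline\xi]$. $w^\psi(t,\mathbf x,y)=U(y)-U'(y)\widetilde w(t,\mathbf x)\psi$, so $w^\psi_{YY}=U''(y)-U'''(y)\widetilde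 w(t,\mathbf x)\psi$. For $\boldsymbol\upsilon=(\theta,\phi)\in\mathbb R^2$ and $\boldsymbol\zeta=(\nu,\sigma,\eta,\xi)$, let $\mathbf z=\big(\sigma S(\theta-(\Delta-\phi\mathcal C_S)),\ \phi\mathcal C_\Sigma-\mathcal V_\Sigma\big)^\top$, $Q=\begin{pmatrix}1&\eta\\\eta&\eta^2+\xi\end{pmatrix}$, $\widetilde{\mathbf w}=\big(\sigma S(\widetilde w_S+\gamma\widetilde w_A),\ \widetilde w_\Sigma\big)^\top$ (all at $(t,\mathbf x)$), and $H^\psi_4(t,\mathbf x,y;\boldsymbol\upsilon,\boldsymbol\zeta)=-\frac{w^\psi_{YY}(t,\mathbf x,y)}2\mathbf z^\top Q\mathbf z+\psi U''(y)\widetilde{\mathbf w}^\top Q\mathbf z$. Delta-vega hedge $\boldsymbol\upsilon^\star_t=(\Delta-\frac{\mathcal V_\Sigma}{\mathcal C_\Sigma}\mathcal C_S,\frac{\mathcal V_\Sigma}{\mathcal C_\Sigma})(t,\mathbf X_t)$. Standing hypotheses (H): Assumption (A) holds, $\boldsymbol\upsilon^\star\in\mathfrak Y$, and $(P^\psi)_{\psi\in(0,\psi_0)}\subset\mathfrak P$ is a candidate asymptotic model family. *)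

theory Defs
  imports "HOL-Probability.Probability"
begin

text \<open>A path is omega = (omega^S, omega^Sigma, omega^A) : [0,T] -> R^3; we represent
 it as a total function, extended constantly outside [0,T].\<close>

type_synonym path = "real \<Rightarrow> real \<times> real \<times> real"

definition Omega :: "real \<Rightarrow> real \<Rightarrow> real \<Rightarrow> real \<Rightarrow> path set" where
  "Omega T S0 Sig0 A0 = {\<omega>. continuous_on {0..T} \<omega> \<and> \<omega> 0 = (S0, Sig0, A0)
      \<and> (\<forall>t. \<omega> t = \<omega> (max 0 (min T t)))}"

definition sup_dist :: "real \<Rightarrow> path \<Rightarrow> path \<Rightarrow> real" where
  "sup_dist T \<omega> \<omega>' = (SUP t\<in>{0..T}. dist (\<omega> t) (\<omega>' t))"

definition unif_open :: "real \<Rightarrow> path set \<Rightarrow> path set set" where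
  "unif_open T \<Omega> = {U. U \<subseteq> \<Omega> \<and> (\<forall>\<omega>\<in>U. \<exists>r>0. \<forall>\<omega>'\<in>\<Omega>. sup_dist T \<omega> \<omega>' < r \<longrightarrow> \<omega>' \<in> U)}"

definition path_events :: "real \<Rightarrow> path set \<Rightarrow> path set set" where
  "path_events T \<Omega> = sigma_sets \<Omega> (unif_open T \<Omega>)"

definition S_of :: "path \<Rightarrow> real \<Rightarrow> real" where "S_of \<omega> t = fst (\<omega> t)"
definition Sig_of :: "path \<Rightarrow> real \<Rightarrow> real" where "Sig_of \<omega> t = fst (snd (\<omega> t))"
definition A_of :: "path \<Rightarrow> real \<Rightarrow> real" where "A_of \<omega> t = snd (snd (\<omega> t))"
definition M_of :: "path \<Rightarrow> real \<Rightarrow> real" where "M_of \<omega> t = (SUP u\<in>{0..t}. S_of \<omega> u)"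

definition X :: "path \<Rightarrow> real \<Rightarrow> real \<times> real \<times> real \<times> real" where
  "X \<omega> t = (S_of \<omega> t, A_of \<omega> t, M_of \<omega> t, Sig_of \<omega> t)"

text \<open>Points (t,S,A,M,Sigma); R_+ is read as (0,infinity).\<close>
definition D0 :: "real \<Rightarrow> (real \<times> real \<times> real \<times> real \<times> real) set" where
  "D0 T = {(t,S,A,M,Sg). 0 < t \<and> t < T \<and> 0 < S \<and> 0 < M \<and> 0 < Sg}"

definition DD :: "real \<Rightarrow> real \<Rightarrow> real \<Rightarrow> (real \<times> real \<times> real \<times> real \<times> real) set" where
  "DD T Sl Sh = {(t,S,A,M,Sg). 0 < t \<and> t < T \<and> 0 < S \<and> 0 < M \<and> Sl \<le> Sg \<and> Sg \<le> Sh}"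

definition Lp :: "real \<Rightarrow> real \<Rightarrow> path measure set \<Rightarrow> (real \<Rightarrow> real \<times> real \<times> real \<times> real \<Rightarrow> real) \<Rightarrow> bool" where
  "Lp p T Ps K \<longleftrightarrow>
     (\<lambda>(t,x). K t x) \<in> borel_measurable (restrict_space borel (D0 T)) \<and>
     (\<exists>B::ennreal. B < \<infinity> \<and>
        (\<forall>P\<in>Ps. (\<integral>\<^sup>+\<omega>. (\<integral>\<^sup>+t\<in>{0..T}. ennreal (\<bar>K t (X \<omega> t)\<bar> powr p) \<partial>lborel) \<partial>P) \<le> B))"

type_synonym fun5 = "real \<Rightarrow> real \<Rightarrow> real \<Rightarrow> real \<Rightarrow> real \<Rightarrow> real"
type_synonym fun3 = "real \<Rightarrow> real \<Rightarrow> real \<Rightarrow> real"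

definition pt :: "fun5 \<Rightarrow> fun5" where "pt f = (\<lambda>t S A M Sg. deriv (\<lambda>u. f u S A M Sg) t)"
definition pS :: "fun5 \<Rightarrow> fun5" where "pS f = (\<lambda>t S A M Sg. deriv (\<lambda>u. f t u A M Sg) S)"
definition pA :: "fun5 \<Rightarrow> fun5" where "pA f = (\<lambda>t S A M Sg. deriv (\<lambda>u. f t S u M Sg) A)"
definition pM :: "fun5 \<Rightarrow> fun5" where "pM f = (\<lambda>t S A M Sg. deriv (\<lambda>u. f t S A u Sg) M)"
definition pSig :: "fun5 \<Rightarrow> fun5" where "pSig f = (\<lambda>t S A M Sg. deriv (\<lambda>u. f t S A M u) Sg)"

definition cont5 :: "fun5 \<Rightarrow> (real \<times> real \<times> real \<times> real \<times> real) set \<Rightarrow> bool" where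
  "cont5 f D \<longleftrightarrow> continuous_on D (\<lambda>(t,S,A,M,Sg). f t S A M Sg)"

definition diff_t :: "fun5 \<Rightarrow> (real \<times> real \<times> real \<times> real \<times> real) set \<Rightarrow> bool" where
  "diff_t f D \<longleftrightarrow> (\<forall>(t,S,A,M,Sg)\<in>D. (\<lambda>u. f u S A M Sg) differentiable (at t))"
definition diff_S :: "fun5 \<Rightarrow> (real \<times> real \<times> real \<times> real \<times> real) set \<Rightarrow> bool" where
  "diff_S f D \<longleftrightarrow> (\<forall>(t,S,A,M,Sg)\<in>D. (\<lambda>u. f t u A M Sg) differentiable (at S))"
definition diff_A :: "fun5 \<Rightarrow> (real \<times> real \<times> real \<times> real \<times> real) set \<Rightarrow> bool" where
  "diff_A f D \<longleftrightarrow> (\<forall>(t,S,A,M,Sg)\<in>D. (\<lambda>u. f t S u M Sg) differentiable (at A))"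
definition diff_M :: "fun5 \<Rightarrow> (real \<times> real \<times> real \<times> real \<times> real) set \<Rightarrow> bool" where
  "diff_M f D \<longleftrightarrow> (\<forall>(t,S,A,M,Sg)\<in>D. (\<lambda>u. f t S A u Sg) differentiable (at M))"
definition diff_Sig :: "fun5 \<Rightarrow> (real \<times> real \<times> real \<times> real \<times> real) set \<Rightarrow> bool" where
  "diff_Sig f D \<longleftrightarrow> (\<forall>(t,S,A,M,Sg)\<in>D. (\<lambda>u. f t S A M u) differentiable (at Sg))"

text \<open>C^{1,2,2,1,2}(D): continuous partials of order 1 in t and M, and of order up to 2
  (including mixed ones) in (S, A, Sigma).\<close>
definition C12212 :: "fun5 \<Rightarrow> (real \<times> real \<times> real \<times> real \<times> real) set \<Rightarrow> bool" where
  "C12212 f D \<longleftrightarrow> cont5 f D \<and> diff_t f D \<and> diff_S f D \<and> diff_A f D \<and> diff_M f D \<and> diff_Sig f D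
     \<and> cont5 (pt f) D \<and> cont5 (pM f) D
     \<and> (\<forall>g\<in>{pS f, pA f, pSig f}. cont5 g D \<and> diff_S g D \<and> diff_A g D \<and> diff_Sig g D
          \<and> cont5 (pS g) D \<and> cont5 (pA g) D \<and> cont5 (pSig g) D)"

definition ct :: "fun3 \<Rightarrow> fun3" where "ct f = (\<lambda>t S Sg. deriv (\<lambda>u. f u S Sg) t)"
definition cS :: "fun3 \<Rightarrow> fun3" where "cS f = (\<lambda>t S Sg. deriv (\<lambda>u. f t u Sg) S)"
definition cSig :: "fun3 \<Rightarrow> fun3" where "cSig f = (\<lambda>t S Sg. deriv (\<lambda>u. f t S u) Sg)"

definition cont3 :: "fun3 \<Rightarrow> (real \<times> real \<times> real) set \<Rightarrow> bool" where
  "cont3 f D \<longleftrightarrow> continuous_on D (\<lambda>(t,S,Sg). f t S Sg)"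

text \<open>C^{1,2,2}(D): continuous partials of order 1 in t and up to 2 in (S, Sigma).\<close>
definition C122 :: "fun3 \<Rightarrow> (real \<times> real \<times> real) set \<Rightarrow> bool" where
  "C122 f D \<longleftrightarrow> cont3 f D
     \<and> (\<forall>(t,S,Sg)\<in>D. (\<lambda>u. f u S Sg) differentiable (at t) \<and> (\<lambda>u. f t u Sg) differentiable (at S)
            \<and> (\<lambda>u. f t S u) differentiable (at Sg))
     \<and> cont3 (ct f) D
     \<and> (\<forall>g\<in>{cS f, cSig f}. cont3 g D
          \<and> (\<forall>(t,S,Sg)\<in>D. (\<lambda>u. g t u Sg) differentiable (at S) \<and> (\<lambda>u. g t S u) differentiable (at Sg))
          \<and> cont3 (cS g) D \<and> cont3 (cSig g) D)"

type_synonym coef = "real \<Rightarrow> real \<Rightarrow> real \<Rightarrow> real \<Rightarrow> real"  \<comment> \<open>functions of (t,S,A,M)\<close>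
type_synonym vec4 = "real \<times> real \<times> real \<times> real"

definition Delta :: "fun5 \<Rightarrow> coef \<Rightarrow> fun5" where
  "Delta V \<gamma> = (\<lambda>t S A M Sg. pS V t S A M Sg + \<gamma> t S A M * pA V t S A M Sg)"

definition Gam :: "fun5 \<Rightarrow> coef \<Rightarrow> fun5" where
  "Gam V \<gamma> = (\<lambda>t S A M Sg. pS (pS V) t S A M Sg + 2 * \<gamma> t S A M * pA (pS V) t S A M Sg
      + (\<gamma> t S A M)\<^sup>2 * pA (pA V) t S A M Sg)"

definition dDelta_dSig :: "fun5 \<Rightarrow> coef \<Rightarrow> fun5" where
  "dDelta_dSig V \<gamma> = (\<lambda>t S A M Sg. pSig (pS V) t S A M Sg + \<gamma> t S A M * pSig (pA V) t S A M Sg)"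

definition cvec :: "fun3 \<Rightarrow> real \<Rightarrow> real \<Rightarrow> real \<Rightarrow> vec4" where
  "cvec C t S Sg = (cSig C t S Sg, Sg * S\<^sup>2 * cS (cS C) t S Sg, Sg * S * cSig (cS C) t S Sg,
      cSig (cSig C) t S Sg / 2)"

definition vvec :: "fun5 \<Rightarrow> coef \<Rightarrow> coef \<Rightarrow> real \<Rightarrow> real \<Rightarrow> real \<Rightarrow> real \<Rightarrow> real \<Rightarrow> vec4" where
  "vvec V \<beta> \<gamma> t S A M Sg = (pSig V t S A M Sg,
      Sg * (\<beta> t S A M * pA V t S A M Sg + S\<^sup>2 * Gam V \<gamma> t S A M Sg),
      Sg * S * dDelta_dSig V \<gamma> t S A M Sg,
      pSig (pSig V) t S A M Sg / 2)"

text \<open>Psi = diag(psi_nu, psi_sigma, psi_eta, psi_xi), stored as a 4-tuple.\<close>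
fun ipPsi :: "vec4 \<Rightarrow> vec4 \<Rightarrow> vec4 \<Rightarrow> real" where
  "ipPsi (p1,p2,p3,p4) (a1,a2,a3,a4) (b1,b2,b3,b4) = p1*a1*b1 + p2*a2*b2 + p3*a3*b3 + p4*a4*b4"

fun pmul :: "vec4 \<Rightarrow> vec4 \<Rightarrow> vec4" where
  "pmul (p1,p2,p3,p4) (a1,a2,a3,a4) = (p1*a1, p2*a2, p3*a3, p4*a4)"

fun dot4 :: "vec4 \<Rightarrow> vec4 \<Rightarrow> real" where
  "dot4 (a1,a2,a3,a4) (b1,b2,b3,b4) = a1*b1 + a2*b2 + a3*b3 + a4*b4"

definition psi_xi :: "vec4 \<Rightarrow> real" where "psi_xi Psi = snd (snd (snd Psi))"

definition lam :: "vec4 \<Rightarrow> vec4 \<Rightarrow> vec4 \<Rightarrow> real \<Rightarrow> real \<Rightarrow> real" where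
  "lam Psi c v CSS VSS =
     (if VSS - (ipPsi Psi c v / ipPsi Psi c c) * CSS \<ge> 0 then ipPsi Psi c v / ipPsi Psi c c
      else (ipPsi Psi c v - CSS * VSS * psi_xi Psi / 4) / (ipPsi Psi c c - CSS\<^sup>2 * psi_xi Psi / 4))"

definition neg_part :: "real \<Rightarrow> real" where "neg_part x = max (- x) 0"

definition zeta_tilde :: "vec4 \<Rightarrow> fun3 \<Rightarrow> fun5 \<Rightarrow> coef \<Rightarrow> coef \<Rightarrow> real \<Rightarrow> real \<Rightarrow> real \<Rightarrow> real \<Rightarrow> real \<Rightarrow> vec4" where
  "zeta_tilde Psi C V \<beta> \<gamma> t S A M Sg =
     (let c = cvec C t S Sg; v = vvec V \<beta> \<gamma> t S A M Sg;
          CSS = cSig (cSig C) t S Sg; VSS = pSig (pSig V) t S A M Sg;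
          l = lam Psi c v CSS VSS; m = neg_part (VSS - l * CSS) / 2
      in pmul Psi (v - l *\<^sub>R c + m *\<^sub>R (0,0,0,1)))"

definition zeta0 :: "real \<Rightarrow> vec4" where "zeta0 Sg = (0, Sg, 0, 0)"

definition zeta_psi :: "vec4 \<Rightarrow> fun3 \<Rightarrow> fun5 \<Rightarrow> coef \<Rightarrow> coef \<Rightarrow> real \<Rightarrow> real \<Rightarrow> real
    \<Rightarrow> real \<Rightarrow> real \<Rightarrow> real \<Rightarrow> real \<Rightarrow> real \<Rightarrow> vec4" where
  "zeta_psi Psi C V \<beta> \<gamma> Sl Sh psi t S A M Sg =
     zeta0 Sg + ((if Sl < Sg \<and> Sg < Sh then 1 else 0) * psi) *\<^sub>R zeta_tilde Psi C V \<beta> \<gamma> t S A M Sg"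

definition gtilde :: "vec4 \<Rightarrow> fun3 \<Rightarrow> fun5 \<Rightarrow> coef \<Rightarrow> coef \<Rightarrow> fun5" where
  "gtilde Psi C V \<beta> \<gamma> t S A M Sg = dot4 (vvec V \<beta> \<gamma> t S A M Sg) (zeta_tilde Psi C V \<beta> \<gamma> t S A M Sg)"

fun bC :: "fun3 \<Rightarrow> real \<Rightarrow> real \<Rightarrow> real \<Rightarrow> vec4 \<Rightarrow> real" where
  "bC C t S Sg (\<nu>,\<sigma>,\<eta>,\<xi>) = \<nu> * cSig C t S Sg + S\<^sup>2 * cS (cS C) t S Sg * (\<sigma>\<^sup>2 - Sg\<^sup>2) / 2
     + \<sigma> * \<eta> * S * cSig (cS C) t S Sg + (\<eta>\<^sup>2 + \<xi>) * cSig (cSig C) t S Sg / 2"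

text \<open>a^T Q b with Q = [[1, eta],[eta, eta^2 + xi]]\<close>
definition qf :: "real \<Rightarrow> real \<Rightarrow> real \<times> real \<Rightarrow> real \<times> real \<Rightarrow> real" where
  "qf \<eta> \<xi> a b = fst a * fst b + \<eta> * fst a * snd b + \<eta> * snd a * fst b + (\<eta>\<^sup>2 + \<xi>) * snd a * snd b"

definition H4 :: "(real \<Rightarrow> real) \<Rightarrow> fun5 \<Rightarrow> fun3 \<Rightarrow> coef \<Rightarrow> fun5 \<Rightarrow> real \<Rightarrow> real \<Rightarrow> real \<Rightarrow> real
    \<Rightarrow> real \<Rightarrow> real \<Rightarrow> real \<Rightarrow> real \<times> real \<Rightarrow> vec4 \<Rightarrow> real" where
  "H4 U V C \<gamma> w psi t S A M Sg y ups zeta =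
     (case ups of (\<theta>, \<phi>) \<Rightarrow> case zeta of (\<nu>, \<sigma>, \<eta>, \<xi>) \<Rightarrow>
       let wYY = deriv (deriv U) y - deriv (deriv (deriv U)) y * w t S A M Sg * psi;
           z = (\<sigma> * S * (\<theta> - (Delta V \<gamma> t S A M Sg - \<phi> * cS C t S Sg)),
                \<phi> * cSig C t S Sg - pSig V t S A M Sg);
           wv = (\<sigma> * S * (pS w t S A M Sg + \<gamma> t S A M * pA w t S A M Sg), pSig w t S A M Sg)
       in - (wYY / 2) * qf \<eta> \<xi> z z + psi * deriv (deriv U) y * qf \<eta> \<xi> wv z)"

end

theory Submission
  imports Defs
begin

lemma omega_clamp:
  assumes "\<omega> \<in> Omega T S0 Sig0 A0"
  shows "\<omega> t = \<omega> (max 0 (min T t))"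
  using assms unfolding Omega_def by auto

lemma omega_cont:
  assumes T: "0 < T" and w: "\<omega> \<in> Omega T S0 Sig0 A0"
  shows "continuous_on UNIV \<omega>"
proof -
  have c: "continuous_on {0..T} \<omega>" using w unfolding Omega_def by auto
  have "continuous_on UNIV (\<lambda>t. \<omega> (max 0 (min T t)))"
    by (rule continuous_on_compose2[OF c]) (use T in \<open>auto intro!: continuous_intros\<close>)
  moreover have "(\<lambda>t. \<omega> (max 0 (min T t))) = \<omega>" using omega_clamp[OF w] by auto
  ultimately show ?thesis by metis
qed

lemma omega_bounded:
  assumes T: "0 < T" and w: "\<omega> \<in> Omega T S0 Sig0 A0"
  shows "\<exists>B. \<forall>t. norm (\<omega> t) \<le> B"
proof -
  have c: "continuous_on {0..T} \<omega>" using w unfolding Omega_def by auto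
  have "compact (\<omega> ` {0..T})" by (rule compact_continuous_image[OF c]) simp
  then obtain B where B: "\<forall>x\<in>\<omega> ` {0..T}. norm x \<le> B"
    using compact_imp_bounded bounded_iff by metis
  have "norm (\<omega> t) \<le> B" for t
  proof -
    have "max 0 (min T t) \<in> {0..T}" using T by auto
    hence "\<omega> (max 0 (min T t)) \<in> \<omega> ` {0..T}" by blast
    thus ?thesis using omega_clamp[OF w, of t] B by metis
  qed
  thus ?thesis by blast
qed

lemma S_of_bounded:
  assumes T: "0 < T" and w: "\<omega> \<in> Omega T S0 Sig0 A0"
  shows "\<exists>B. \<forall>t. \<bar>S_of \<omega> t\<bar> \<le> B"
proof -
  obtain B where B: "\<forall>t. norm (\<omega> t) \<le> B" using omega_bounded[OF T w] by blast
  have "\<bar>S_of \<omega> t\<bar> \<le> B" for t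
  proof -
    have "\<bar>fst (\<omega> t)\<bar> \<le> norm (\<omega> t)"
      using norm_fst_le[of "fst (\<omega> t)" "snd (\<omega> t)"] by simp
    thus ?thesis using B unfolding S_of_def by (meson order.trans)
  qed
  thus ?thesis by blast
qed

lemma eval_meas:
  assumes T: "0 < T" and sP: "sets P = path_events T (Omega T S0 Sig0 A0)"
    and spP: "space P = Omega T S0 Sig0 A0"
  shows "(\<lambda>\<omega>. \<omega> t) \<in> borel_measurable P"
proof (rule borel_measurableI)
  fix S :: "(real \<times> real \<times> real) set" assume S: "open S"
  let ?\<Omega> = "Omega T S0 Sig0 A0"
  let ?t = "max 0 (min T t)"
  have tT: "?t \<in> {0..T}" using T by auto
  have "(\<lambda>\<omega>. \<omega> t) -` S \<inter> space P \<in> unif_open T ?\<Omega>"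
    unfolding unif_open_def spP
  proof (intro CollectI conjI ballI)
    show "(\<lambda>\<omega>. \<omega> t) -` S \<inter> ?\<Omega> \<subseteq> ?\<Omega>" by auto
  next
    fix \<omega> assume "\<omega> \<in> (\<lambda>\<omega>. \<omega> t) -` S \<inter> ?\<Omega>"
    hence w: "\<omega> \<in> ?\<Omega>" and wS: "\<omega> t \<in> S" by auto
    obtain r where r: "r > 0" "ball (\<omega> t) r \<subseteq> S" using S wS open_contains_ball by blast
    show "\<exists>r>0. \<forall>\<omega>'\<in>?\<Omega>. sup_dist T \<omega> \<omega>' < r \<longrightarrow> \<omega>' \<in> (\<lambda>\<omega>. \<omega> t) -` S \<inter> ?\<Omega>"
    proof (intro exI[of _ r] conjI ballI impI)
      fix \<omega>' assume w': "\<omega>' \<in> ?\<Omega>" and d: "sup_dist T \<omega> \<omega>' < r"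
      have c: "continuous_on {0..T} (\<lambda>u. dist (\<omega> u) (\<omega>' u))"
        using w w' unfolding Omega_def by (auto intro!: continuous_intros)
      have "bounded ((\<lambda>u. dist (\<omega> u) (\<omega>' u)) ` {0..T})"
        by (rule compact_imp_bounded, rule compact_continuous_image[OF c]) simp
      hence "bdd_above ((\<lambda>u. dist (\<omega> u) (\<omega>' u)) ` {0..T})" by (rule bounded_imp_bdd_above)
      hence "dist (\<omega> ?t) (\<omega>' ?t) \<le> sup_dist T \<omega> \<omega>'"
        unfolding sup_dist_def using tT by (intro cSUP_upper) auto
      hence "dist (\<omega> t) (\<omega>' t) < r"
        using d omega_clamp[OF w, of t] omega_clamp[OF w', of t] by simp
      thus "\<omega>' \<in> (\<lambda>\<omega>. \<omega> t) -` S \<inter> ?\<Omega>" using r w' by auto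
    qed (use r in auto)
  qed
  thus "(\<lambda>\<omega>. \<omega> t) -` S \<inter> space P \<in> sets P"
    unfolding sP path_events_def by (rule sigma_sets.Basic)
qed

lemma floor_approx: "(\<lambda>n. real_of_int \<lfloor>real (Suc n) * t\<rfloor> / real (Suc n)) \<longlonglongrightarrow> t"
proof -
  have b: "\<bar>real_of_int \<lfloor>real (Suc n) * t\<rfloor> / real (Suc n) - t\<bar> \<le> inverse (real (Suc n))" for n
  proof -
    define N where "N = real (Suc n)"
    have N: "N > 0" unfolding N_def by simp
    have "N * t - 1 < real_of_int \<lfloor>N * t\<rfloor>" "real_of_int \<lfloor>N * t\<rfloor> \<le> N * t"
      by linarith+
    hence h: "\<bar>real_of_int \<lfloor>N * t\<rfloor> - N * t\<bar> \<le> 1" by linarith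
    have e: "real_of_int \<lfloor>N * t\<rfloor> / N - t = (real_of_int \<lfloor>N * t\<rfloor> - N * t) / N"
      using N by (simp add: field_simps)
    have "\<bar>(real_of_int \<lfloor>N * t\<rfloor> - N * t) / N\<bar> \<le> 1 / N"
      using h N by (simp add: abs_divide divide_right_mono)
    thus ?thesis using e unfolding N_def by (simp add: divide_inverse)
  qed
  have "(\<lambda>n. real_of_int \<lfloor>real (Suc n) * t\<rfloor> / real (Suc n) - t) \<longlonglongrightarrow> 0"
    by (rule Lim_null_comparison[OF _ LIMSEQ_inverse_real_of_nat]) (use b in auto)
  thus ?thesis by (simp add: LIM_zero_iff)
qed

lemma eval_joint:
  assumes T: "0 < T" and sP: "sets P = path_events T (Omega T S0 Sig0 A0)"
    and spP: "space P = Omega T S0 Sig0 A0"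
  shows "(\<lambda>p. fst p (snd p)) \<in> borel_measurable (P \<Otimes>\<^sub>M lborel)"
proof (rule borel_measurable_LIMSEQ_metric)
  fix n :: nat
  have f: "(\<lambda>p. fst p (real_of_int i / real (Suc n))) \<in> borel_measurable (P \<Otimes>\<^sub>M lborel)" for i :: int
    by (rule measurable_compose[OF measurable_fst eval_meas[OF T sP spP]])
  have g1: "(\<lambda>p. real (Suc n) * snd p) \<in> borel_measurable (P \<Otimes>\<^sub>M lborel)" by measurable
  have g: "(\<lambda>p. \<lfloor>real (Suc n) * snd p\<rfloor>) \<in> measurable (P \<Otimes>\<^sub>M lborel) (count_space UNIV)"
    by (rule measurable_compose[OF g1 measurable_real_floor])
  show "(\<lambda>p. fst p (real_of_int \<lfloor>real (Suc n) * snd p\<rfloor> / real (Suc n))) \<in> borel_measurable (P \<Otimes>\<^sub>M lborel)"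
    using measurable_compose_countable[where f="\<lambda>i p. fst p (real_of_int i / real (Suc n))", OF f g] .
next
  fix p :: "path \<times> real" assume "p \<in> space (P \<Otimes>\<^sub>M lborel)"
  hence w: "fst p \<in> Omega T S0 Sig0 A0" by (auto simp: space_pair_measure spP)
  have "isCont (fst p) (snd p)"
    using omega_cont[OF T w] by (simp add: continuous_on_eq_continuous_at)
  thus "(\<lambda>n. fst p (real_of_int \<lfloor>real (Suc n) * snd p\<rfloor> / real (Suc n))) \<longlonglongrightarrow> fst p (snd p)"
    by (rule isCont_tendsto_compose[OF _ floor_approx])
qed

lemma bm_fst: "f \<in> borel_measurable M \<Longrightarrow> (\<lambda>x. fst (f x)) \<in> borel_measurable M"
  by (rule borel_measurable_continuous_on[OF continuous_on_fst[OF continuous_on_id]])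

lemma bm_snd: "f \<in> borel_measurable M \<Longrightarrow> (\<lambda>x. snd (f x)) \<in> borel_measurable M"
  by (rule borel_measurable_continuous_on[OF continuous_on_snd[OF continuous_on_id]])

definition Irat :: "real set" where "Irat = {q. q \<in> \<rat> \<and> 0 \<le> q \<and> q \<le> 1}"

lemma countable_Irat: "countable Irat"
  by (rule countable_subset[OF _ countable_rat]) (auto simp: Irat_def)

lemma S_of_cont:
  assumes T: "0 < T" and w: "\<omega> \<in> Omega T S0 Sig0 A0"
  shows "isCont (S_of \<omega>) t"
proof -
  have "continuous_on UNIV (\<lambda>u. fst (\<omega> u))"
    using omega_cont[OF T w] by (intro continuous_intros)
  hence "continuous_on UNIV (S_of \<omega>)" unfolding S_of_def[abs_def] by simp
  thus ?thesis by (simp add: continuous_on_eq_continuous_at)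
qed

lemma M_sup_rat:
  assumes T: "0 < T" and w: "\<omega> \<in> Omega T S0 Sig0 A0" and t: "0 \<le> t"
  shows "M_of \<omega> t = (SUP q\<in>Irat. S_of \<omega> (q*t))"
proof -
  obtain B where B: "\<forall>u. \<bar>S_of \<omega> u\<bar> \<le> B" using S_of_bounded[OF T w] by blast
  have bdd1: "bdd_above (S_of \<omega> ` {0..t})" using B by (intro bdd_aboveI[of _ B]) (auto simp: abs_le_iff)
  have bdd2: "bdd_above ((\<lambda>q. S_of \<omega> (q*t)) ` Irat)" using B by (intro bdd_aboveI[of _ B]) (auto simp: abs_le_iff)
  have I0: "0 \<in> Irat" by (simp add: Irat_def)
  have le1: "(SUP q\<in>Irat. S_of \<omega> (q*t)) \<le> M_of \<omega> t"
    unfolding M_of_def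
  proof (rule cSUP_mono[OF _ bdd1])
    show "Irat \<noteq> {}" using I0 by auto
    fix q assume "q \<in> Irat"
    hence "q*t \<in> {0..t}" using t by (auto simp: Irat_def mult_left_le_one_le)
    thus "\<exists>m\<in>{0..t}. S_of \<omega> (q*t) \<le> S_of \<omega> m" by auto
  qed
  have le2: "M_of \<omega> t \<le> (SUP q\<in>Irat. S_of \<omega> (q*t))"
    unfolding M_of_def
  proof (rule cSUP_least)
    show "{0..t} \<noteq> {}" using t by auto
    fix u assume u: "u \<in> {0..t}"
    show "S_of \<omega> u \<le> (SUP q\<in>Irat. S_of \<omega> (q*t))"
    proof (rule field_le_epsilon)
      fix e :: real assume e: "0 < e"
      obtain d where d: "d > 0" "\<forall>v. dist v u < d \<longrightarrow> dist (S_of \<omega> v) (S_of \<omega> u) < e"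
        using S_of_cont[OF T w, of u] e unfolding continuous_at_eps_delta by blast
      have "\<exists>q\<in>Irat. dist (q*t) u < d"
      proof (cases "t = 0")
        case True
        hence "u = 0" using u by simp
        hence "dist (0*t) u < d" using d(1) by simp
        thus ?thesis using I0 by blast
      next
        case False
        hence tp: "t > 0" using t by simp
        define x where "x = u / t"
        have x: "0 \<le> x" "x \<le> 1" using u tp by (auto simp: x_def divide_le_eq_1)
        have dt: "d / t > 0" using d(1) tp by simp
        have "\<exists>q\<in>Irat. \<bar>q - x\<bar> < d / t"
        proof (cases "x = 1")
          case True
          have "(1::real) \<in> Irat" by (simp add: Irat_def)
          moreover have "\<bar>1 - x\<bar> < d / t" using True dt by simp
          ultimately show ?thesis by blast
        next
          case False
          hence "x < min 1 (x + d/t)" using x dt by simp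
          then obtain q where q: "q \<in> \<rat>" "x < q" "q < min 1 (x + d/t)"
            using Rats_dense_in_real by blast
          have "q \<in> Irat" using q x unfolding Irat_def by simp
          moreover have "\<bar>q - x\<bar> < d / t" using q by simp
          ultimately show ?thesis by blast
        qed
        then obtain q where q: "q \<in> Irat" "\<bar>q - x\<bar> < d / t" by blast
        have "q*t - u = (q - x) * t" using tp by (simp add: x_def algebra_simps)
        hence "\<bar>q*t - u\<bar> = \<bar>q - x\<bar> * t" using tp by (simp add: abs_mult)
        also have "\<dots> < d" using q(2) tp by (simp add: less_divide_eq)
        finally have "dist (q*t) u < d" by (simp add: dist_real_def)
        thus ?thesis using q(1) by blast
      qed
      then obtain q where q: "q \<in> Irat" "dist (q*t) u < d" by blast
      have "dist (S_of \<omega> (q*t)) (S_of \<omega> u) < e" using d(2) q(2) by blast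
      hence "S_of \<omega> u < S_of \<omega> (q*t) + e" unfolding dist_real_def by (simp add: abs_less_iff)
      also have "S_of \<omega> (q*t) \<le> (SUP q\<in>Irat. S_of \<omega> (q*t))" by (rule cSUP_upper[OF q(1) bdd2])
      finally show "S_of \<omega> u \<le> (SUP q\<in>Irat. S_of \<omega> (q*t)) + e" by simp
    qed
  qed
  show ?thesis using le1 le2 by simp
qed

lemma S_joint:
  assumes T: "0 < T" and sP: "sets P = path_events T (Omega T S0 Sig0 A0)"
    and spP: "space P = Omega T S0 Sig0 A0"
  shows "(\<lambda>p. fst (fst p (c * snd p))) \<in> borel_measurable (P \<Otimes>\<^sub>M lborel)"
proof -
  have m: "(\<lambda>p. (fst p, c * snd p)) \<in> measurable (P \<Otimes>\<^sub>M lborel) (P \<Otimes>\<^sub>M lborel)"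
    by measurable
  have "(\<lambda>p. (\<lambda>p. fst p (snd p)) ((\<lambda>p. (fst p, c * snd p)) p)) \<in> borel_measurable (P \<Otimes>\<^sub>M lborel)"
    by (rule measurable_compose[OF m eval_joint[OF T sP spP]])
  hence "(\<lambda>p. fst p (c * snd p)) \<in> borel_measurable (P \<Otimes>\<^sub>M lborel)" by simp
  thus ?thesis by (rule bm_fst)
qed

lemma M_joint:
  assumes T: "0 < T" and sP: "sets P = path_events T (Omega T S0 Sig0 A0)"
    and spP: "space P = Omega T S0 Sig0 A0"
  shows "(\<lambda>p. M_of (fst p) (snd p)) \<in> borel_measurable (P \<Otimes>\<^sub>M lborel)"
proof -
  have F: "(\<lambda>p. SUP q\<in>Irat. S_of (fst p) (q * snd p)) \<in> borel_measurable (P \<Otimes>\<^sub>M lborel)"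
  proof (rule borel_measurable_cSUP[OF countable_Irat])
    fix q show "(\<lambda>p. S_of (fst p) (q * snd p)) \<in> borel_measurable (P \<Otimes>\<^sub>M lborel)"
      unfolding S_of_def by (rule S_joint[OF T sP spP])
  next
    fix p :: "path \<times> real" assume "p \<in> space (P \<Otimes>\<^sub>M lborel)"
    hence w: "fst p \<in> Omega T S0 Sig0 A0" by (auto simp: space_pair_measure spP)
    obtain B where B: "\<forall>u. \<bar>S_of (fst p) u\<bar> \<le> B" using S_of_bounded[OF T w] by blast
    show "bdd_above ((\<lambda>q. S_of (fst p) (q * snd p)) ` Irat)"
      using B by (intro bdd_aboveI[of _ B]) (auto simp: abs_le_iff)
  qed
  have G: "(\<lambda>p. if snd p < 0 then M_of (fst p) (snd p) else SUP q\<in>Irat. S_of (fst p) (q * snd p))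
      \<in> borel_measurable (P \<Otimes>\<^sub>M lborel)"
  proof -
    have "\<And>p. snd p < 0 \<Longrightarrow> M_of (fst p) (snd p) = Sup ({}::real set)"
      by (simp add: M_of_def)
    hence e: "(\<lambda>p. if snd p < 0 then M_of (fst p) (snd p) else SUP q\<in>Irat. S_of (fst p) (q * snd p))
      = (\<lambda>p. if snd p < 0 then Sup ({}::real set) else SUP q\<in>Irat. S_of (fst p) (q * snd p))"
      by (intro ext) auto
    show ?thesis unfolding e using F by measurable
  qed
  show ?thesis
  proof (rule measurable_cong[THEN iffD1, OF _ G])
    fix p :: "path \<times> real" assume "p \<in> space (P \<Otimes>\<^sub>M lborel)"
    hence w: "fst p \<in> Omega T S0 Sig0 A0" by (auto simp: space_pair_measure spP)
    show "(if snd p < 0 then M_of (fst p) (snd p) else SUP q\<in>Irat. S_of (fst p) (q * snd p))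
        = M_of (fst p) (snd p)" using M_sup_rat[OF T w] by auto
  qed
qed

lemma X_joint:
  assumes T: "0 < T" and sP: "sets P = path_events T (Omega T S0 Sig0 A0)"
    and spP: "space P = Omega T S0 Sig0 A0"
  shows "(\<lambda>p. X (fst p) (snd p)) \<in> borel_measurable (P \<Otimes>\<^sub>M lborel)"
proof -
  have e: "(\<lambda>p. fst p (snd p)) \<in> borel_measurable (P \<Otimes>\<^sub>M lborel)" by (rule eval_joint[OF T sP spP])
  have M: "(\<lambda>p. M_of (fst p) (snd p)) \<in> borel_measurable (P \<Otimes>\<^sub>M lborel)" by (rule M_joint[OF T sP spP])
  show ?thesis unfolding X_def S_of_def A_of_def Sig_of_def
    by (intro borel_measurable_Pair bm_fst bm_snd e M)
qed

definition Phi :: "real \<Rightarrow> real \<Rightarrow> (real \<Rightarrow> real \<times> real \<times> real \<times> real \<Rightarrow> real) \<Rightarrow> path \<times> real \<Rightarrow> ennreal" where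
  "Phi T r h p = (if (snd p, X (fst p) (snd p)) \<in> D0 T
      then ennreal (\<bar>h (snd p) (X (fst p) (snd p))\<bar> powr r) else 0)"

lemma D0_eq: "D0 T = {p. 0 < fst p \<and> fst p < T \<and> 0 < fst (snd p) \<and> 0 < fst (snd (snd (snd p)))
   \<and> 0 < snd (snd (snd (snd p)))}"
  unfolding D0_def by (auto simp: case_prod_beta)
lemma open_pos: "continuous_on UNIV (f::'a::topological_space \<Rightarrow> real) \<Longrightarrow> open {p. 0 < f p}"
  by (rule open_Collect_less) (auto intro: continuous_on_const)

lemma D0_borel: "D0 T \<in> sets borel"
proof -
  have e: "D0 T = {p. 0 < fst p} \<inter> {p. 0 < T - fst p} \<inter> {p. 0 < fst (snd p)} \<inter> {p. 0 < fst (snd (snd (snd p)))}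
     \<inter> {p. 0 < snd (snd (snd (snd p)))}"
    unfolding D0_eq by auto
  have "open (D0 T)" unfolding e
    by (intro open_Int open_pos; intro continuous_intros)
  thus ?thesis by (rule borel_open)
qed
lemma Phi_meas:
  assumes T: "0 < T" and sP: "sets P = path_events T (Omega T S0 Sig0 A0)"
    and spP: "space P = Omega T S0 Sig0 A0"
    and hm: "(\<lambda>(t,x). h t x) \<in> borel_measurable (restrict_space borel (D0 T))"
  shows "Phi T r h \<in> borel_measurable (P \<Otimes>\<^sub>M lborel)"
proof -
  let ?M = "P \<Otimes>\<^sub>M lborel"
  define Y where "Y = (\<lambda>p::path \<times> real. (snd p, X (fst p) (snd p)))"
  have s: "(\<lambda>p::path \<times> real. snd p) \<in> borel_measurable ?M" by measurable
  have Ym: "Y \<in> borel_measurable ?M" unfolding Y_def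
    by (intro borel_measurable_Pair s X_joint[OF T sP spP])
  have set: "{p \<in> space ?M. Y p \<in> D0 T} \<in> sets ?M"
  proof -
    have "{p \<in> space ?M. Y p \<in> D0 T} = Y -` D0 T \<inter> space ?M" by blast
    thus ?thesis using measurable_sets[OF Ym D0_borel] by (simp only:)
  qed
  have hY: "(\<lambda>p. (\<lambda>(t,x). h t x) (Y p)) \<in> borel_measurable (restrict_space ?M {p. Y p \<in> D0 T})"
    by (rule measurable_compose[OF measurable_restrict_space3[OF Ym] hm]) auto
  have hY': "(\<lambda>p. ennreal (\<bar>(\<lambda>(t,x). h t x) (Y p)\<bar> powr r)) \<in> borel_measurable (restrict_space ?M {p. Y p \<in> D0 T})"
  proof -
    have pw: "(\<lambda>x::real. ennreal (\<bar>x\<bar> powr r)) \<in> borel_measurable borel" by measurable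
    show ?thesis by (rule measurable_compose[OF hY pw])
  qed
  have "(\<lambda>p. if Y p \<in> D0 T then ennreal (\<bar>(\<lambda>(t,x). h t x) (Y p)\<bar> powr r) else 0) \<in> borel_measurable ?M"
    by (rule measurable_If_restrict_space_iff[THEN iffD2, OF set], rule conjI[OF hY'], rule measurable_const, simp)
  moreover have "(\<lambda>p. if Y p \<in> D0 T then ennreal (\<bar>(\<lambda>(t,x). h t x) (Y p)\<bar> powr r) else 0) = Phi T r h"
    by (intro ext) (simp only: Phi_def Y_def prod.case)
  ultimately show ?thesis by (simp only:)
qed


lemma in_D0:
  assumes T: "0 < T" and w: "\<omega> \<in> Omega T S0 Sig0 A0"
    and pos: "\<forall>t\<in>{0..T}. 0 < S_of \<omega> t \<and> 0 < Sig_of \<omega> t"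
    and t: "0 < t" "t < T"
  shows "(t, X \<omega> t) \<in> D0 T"
proof -
  obtain B where B: "\<forall>u. \<bar>S_of \<omega> u\<bar> \<le> B" using S_of_bounded[OF T w] by blast
  have bdd1: "bdd_above (S_of \<omega> ` {0..t})" using B by (intro bdd_aboveI[of _ B]) (auto simp: abs_le_iff)
  have "S_of \<omega> t \<le> M_of \<omega> t" unfolding M_of_def by (rule cSUP_upper[OF _ bdd1]) (use t in auto)
  moreover have "0 < S_of \<omega> t" "0 < Sig_of \<omega> t" using pos t by auto
  ultimately show ?thesis using t by (simp add: D0_eq X_def)
qed

lemma inner_eq:
  assumes T: "0 < T" and w: "\<omega> \<in> Omega T S0 Sig0 A0"
    and pos: "\<forall>t\<in>{0..T}. 0 < S_of \<omega> t \<and> 0 < Sig_of \<omega> t"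
  shows "(\<integral>\<^sup>+t\<in>{0..T}. ennreal (\<bar>h t (X \<omega> t)\<bar> powr r) \<partial>lborel) = (\<integral>\<^sup>+t. Phi T r h (\<omega>, t) \<partial>lborel)"
proof (rule nn_integral_cong_AE)
  have "AE t in lborel. t \<noteq> 0" "AE t in lborel. t \<noteq> T" by (rule AE_lborel_singleton)+
  thus "AE t in lborel. ennreal (\<bar>h t (X \<omega> t)\<bar> powr r) * indicator {0..T} t = Phi T r h (\<omega>, t)"
  proof eventually_elim
    case (elim t)
    show ?case
    proof (cases "0 < t \<and> t < T")
      case True thus ?thesis using in_D0[OF T w pos, of t] by (simp add: Phi_def)
    next
      case False
      hence "t \<notin> {0..T}" using elim by auto
      moreover have "(t, X \<omega> t) \<notin> D0 T" using False unfolding D0_eq by auto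
      ultimately show ?thesis by (simp add: Phi_def)
    qed
  qed
qed

lemma qf_sq: "qf \<eta> \<xi> (a,b) (a,b) = (a + \<eta>*b)^2 + \<xi>*b^2"
  unfolding qf_def by (simp add: power2_eq_square algebra_simps)

lemma key_ineq:
  fixes W u psi \<eta> \<xi> z1 z2 a b K :: real
  assumes Wu: "W \<le> u" and u: "u < 0" and psi: "psi > 0" and xi: "\<xi> \<ge> 0"
    and qK: "qf \<eta> \<xi> (a,b) (a,b) \<le> 2*K"
  shows "-(W/2) * qf \<eta> \<xi> (z1,z2) (z1,z2) + psi * u * qf \<eta> \<xi> (a,b) (z1,z2) \<ge> u*K*psi^2"
proof -
  define c where "c = -W/2"
  have c: "c > 0" "2*c \<ge> -u" using Wu u by (auto simp: c_def)
  define qzz where "qzz = qf \<eta> \<xi> (z1,z2) (z1,z2)"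
  define qwz where "qwz = qf \<eta> \<xi> (a,b) (z1,z2)"
  define qww where "qww = qf \<eta> \<xi> (a,b) (a,b)"
  have qww0: "qww \<ge> 0" unfolding qww_def qf_sq using xi by simp
  have e: "4*c*(c*qzz + psi*u*qwz) + (psi*u)^2*qww =
     ((2*c*z1 + psi*u*a) + \<eta>*(2*c*z2 + psi*u*b))^2 + \<xi>*(2*c*z2+psi*u*b)^2"
    unfolding qzz_def qwz_def qww_def qf_def by (simp add: power2_eq_square algebra_simps)
  have "4*c*(c*qzz + psi*u*qwz) + (psi*u)^2*qww \<ge> 0" unfolding e using xi by simp
  hence h1: "c*qzz + psi*u*qwz \<ge> -((psi*u)^2*qww / (4*c))" using c
    by (simp add: field_simps)
  have "(psi*u)^2*qww / (4*c) \<le> (psi*u)^2*qww / (2*(-u))"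
    using c u qww0 mult_pos_pos[of c "-u"] by (intro divide_left_mono) (auto intro: mult_nonneg_nonneg)
  also have "(psi*u)^2*qww / (2*(-u)) = - (psi^2 * u * qww / 2)" using u c
    by (simp add: power2_eq_square field_simps)
  finally have h2: "c*qzz + psi*u*qwz \<ge> psi^2 * u * qww / 2" using h1 by linarith
  have "psi^2 * u * qww / 2 \<ge> psi^2 * u * K"
  proof -
    have "psi^2 * (-u) * qww \<le> psi^2 * (-u) * (2*K)" using qK u qww_def mult_nonneg_nonpos[of "psi^2" u]
      by (intro mult_left_mono) auto
    thus ?thesis by (simp add: algebra_simps)
  qed
  with h2 show ?thesis unfolding c_def qzz_def qwz_def by (simp add: algebra_simps)
qed

lemma U3_nonneg:
  fixes U :: "real \<Rightarrow> real"
  assumes U_C3: "\<forall>k<3. \<forall>y. ((deriv ^^ k) U) differentiable (at y)"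
    and U_incr: "\<forall>y. deriv U y > 0"
    and U_dara: "\<forall>x y. x \<le> y \<longrightarrow>
                    - deriv (deriv U) y / deriv U y \<le> - deriv (deriv U) x / deriv U x"
  shows "deriv (deriv (deriv U)) y \<ge> 0"
proof -
  have d1: "DERIV (deriv U) y :> deriv (deriv U) y"
    using U_C3[rule_format, of 1 y] by (simp add: DERIV_deriv_iff_real_differentiable)
  have d2: "DERIV (deriv (deriv U)) y :> deriv (deriv (deriv U)) y"
    using U_C3[rule_format, of 2 y] by (simp add: DERIV_deriv_iff_real_differentiable numeral_2_eq_2)
  define f where "f = (\<lambda>y. - deriv (deriv U) y / deriv U y)"
  have df: "DERIV f y :> - ((deriv (deriv (deriv U)) y * deriv U y - deriv (deriv U) y * deriv (deriv U) y)
      / (deriv U y * deriv U y))"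
    unfolding f_def using U_incr[rule_format, of y]
    by (auto intro!: derivative_eq_intros d1 d2 simp: field_simps power2_eq_square)
  have "- ((deriv (deriv (deriv U)) y * deriv U y - deriv (deriv U) y * deriv (deriv U) y)
      / (deriv U y * deriv U y)) \<le> 0"
  proof (rule ccontr)
    assume "\<not> ?thesis"
    then obtain d where "d > 0" "\<forall>h>0. h < d \<longrightarrow> f y < f (y + h)"
      using DERIV_pos_inc_right[OF df] by force
    hence "f y < f (y + d/2)" by auto
    moreover have "f (y + d/2) \<le> f y" unfolding f_def using U_dara \<open>d>0\<close> by auto
    ultimately show False by simp
  qed
  hence "deriv (deriv (deriv U)) y * deriv U y \<ge> deriv (deriv U) y * deriv (deriv U) y"
    using U_incr[rule_format, of y] mult_pos_pos[of "deriv U y" "deriv U y", OF U_incr[rule_format, of y] U_incr[rule_format, of y]]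
    by (auto simp add: zero_le_divide_iff)
  moreover have "deriv (deriv U) y * deriv (deriv U) y \<ge> 0" by simp
  ultimately show ?thesis using U_incr[rule_format, of y]
    by (meson dual_order.trans less_le_not_le zero_le_mult_iff)
qed

lemma qf_bound:
  fixes \<sigma> sh el eh \<eta> \<xi> xh F b :: real
  assumes "0 \<le> \<sigma>" "\<sigma> \<le> sh" "el \<le> \<eta>" "\<eta> \<le> eh" "0 \<le> \<xi>" "\<xi> \<le> xh"
  shows "qf \<eta> \<xi> (\<sigma>*F, b) (\<sigma>*F, b) \<le> 2*(sh^2 * F^2 + (el^2+eh^2+xh) * b^2)"
proof -
  have a: "(\<sigma>*F + \<eta>*b)^2 \<le> 2*(\<sigma>*F)^2 + 2*(\<eta>*b)^2"
    using sum_squares_ge_zero[of "\<sigma>*F - \<eta>*b" 0] by (simp add: power2_eq_square algebra_simps)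
  have s2: "\<sigma>^2 \<le> sh^2" using assms by (intro power_mono) auto
  have e2: "\<eta>^2 \<le> el^2 + eh^2"
  proof (cases "\<eta> \<ge> 0")
    case True hence "\<eta>^2 \<le> eh^2" using assms by (intro power_mono) auto
    thus ?thesis by (simp add: add_increasing)
  next
    case False hence "(-\<eta>)^2 \<le> (-el)^2" using assms by (intro power_mono) auto
    thus ?thesis by (simp add: add_increasing2)
  qed
  have b2: "0 \<le> b^2" "0 \<le> F^2" by simp_all
  have "(\<sigma>*F)^2 \<le> sh^2 * F^2" using mult_right_mono[OF s2 b2(2)] by (simp add: power_mult_distrib)
  moreover have "(\<eta>*b)^2 \<le> (el^2+eh^2) * b^2" using mult_right_mono[OF e2 b2(1)] by (simp add: power_mult_distrib)
  moreover have "\<xi> * b^2 \<le> 2 * xh * b^2" using mult_right_mono[of \<xi> "2*xh" "b^2"] assms by simp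
  ultimately show ?thesis using a unfolding qf_sq by (simp add: algebra_simps)
qed

lemma sq_comb:
  fixes c1 c2 a b :: real
  shows "(c1*a^2 + c2*b^2)^2 \<le> 2*c1^2*a^4 + 2*c2^2*b^4"
proof -
  have "0 \<le> (c1*a^2 - c2*b^2)^2" by simp
  thus ?thesis by (simp add: power2_eq_square power4_eq_xxxx algebra_simps)
qed

lemma abs_powr_num: "\<bar>x::real\<bar> powr (numeral n) = \<bar>x\<bar> ^ (numeral n)"
  by (simp add: powr_numeral)

lemma ennreal_comb:
  fixes c1 c2 a b :: real
  assumes "0 \<le> c1" "0 \<le> c2"
  shows "ennreal (\<bar>c1*a^2 + c2*b^2\<bar> powr 2) \<le>
     ennreal (2*c1^2) * ennreal (\<bar>a\<bar> powr 4) + ennreal (2*c2^2) * ennreal (\<bar>b\<bar> powr 4)"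
proof -
  have "\<bar>c1*a^2 + c2*b^2\<bar> powr 2 = (c1*a^2 + c2*b^2)^2" by (simp add: abs_powr_num)
  moreover have "\<bar>a\<bar> powr 4 = a^4" "\<bar>b\<bar> powr 4 = b^4" by (simp_all add: abs_powr_num)
  ultimately have e: "ennreal (2*c1^2) * ennreal (\<bar>a\<bar> powr 4) + ennreal (2*c2^2) * ennreal (\<bar>b\<bar> powr 4)
     = ennreal (2*c1^2*a^4 + 2*c2^2*b^4)"
    by (simp add: ennreal_mult[symmetric] ennreal_plus[symmetric] zero_le_even_power del: ennreal_plus)
  show ?thesis
    unfolding e \<open>\<bar>c1*a^2 + c2*b^2\<bar> powr 2 = (c1*a^2 + c2*b^2)^2\<close>
    by (rule ennreal_leI[OF sq_comb])
qed

lemma Phi_comb: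
  assumes "0 \<le> c1" "0 \<le> c2"
  shows "Phi T 2 (\<lambda>t x. c1 * (F t x)^2 + c2 * (G t x)^2) p \<le>
    ennreal (2*c1^2) * Phi T 4 F p + ennreal (2*c2^2) * Phi T 4 G p"
  unfolding Phi_def using ennreal_comb[OF assms] by auto

lemma Lp_comb:
  fixes F G :: "real \<Rightarrow> real \<times> real \<times> real \<times> real \<Rightarrow> real"
  assumes T: "0 < T"
    and models: "\<forall>P\<in>Ps. space P = Omega T S0 Sig0 A0 \<and> sets P = path_events T (Omega T S0 Sig0 A0)"
    and pos: "\<forall>P\<in>Ps. AE \<omega> in P. \<forall>t\<in>{0..T}. 0 < S_of \<omega> t \<and> 0 < Sig_of \<omega> t"
    and LF: "Lp 4 T Ps F" and LG: "Lp 4 T Ps G" and c: "0 \<le> c1" "0 \<le> c2"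
  shows "Lp 2 T Ps (\<lambda>t x. c1 * (F t x)^2 + c2 * (G t x)^2)"
proof -
  from LF obtain BF where mF: "(\<lambda>(t,x). F t x) \<in> borel_measurable (restrict_space borel (D0 T))"
    and BF: "BF < \<infinity>" "\<forall>P\<in>Ps. (\<integral>\<^sup>+\<omega>. (\<integral>\<^sup>+t\<in>{0..T}. ennreal (\<bar>F t (X \<omega> t)\<bar> powr 4) \<partial>lborel) \<partial>P) \<le> BF"
    unfolding Lp_def by blast
  from LG obtain BG where mG: "(\<lambda>(t,x). G t x) \<in> borel_measurable (restrict_space borel (D0 T))"
    and BG: "BG < \<infinity>" "\<forall>P\<in>Ps. (\<integral>\<^sup>+\<omega>. (\<integral>\<^sup>+t\<in>{0..T}. ennreal (\<bar>G t (X \<omega> t)\<bar> powr 4) \<partial>lborel) \<partial>P) \<le> BG"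
    unfolding Lp_def by blast
  define K where "K = (\<lambda>t x. c1 * (F t x)^2 + c2 * (G t x)^2)"
  have eK: "(\<lambda>(t,x). K t x) = (\<lambda>p. c1 * ((\<lambda>(t,x). F t x) p)^2 + c2 * ((\<lambda>(t,x). G t x) p)^2)"
    by (auto simp: K_def)
  have mK: "(\<lambda>(t,x). K t x) \<in> borel_measurable (restrict_space borel (D0 T))"
    unfolding eK using mF mG by measurable
  define B where "B = ennreal (2*c1^2) * BF + ennreal (2*c2^2) * BG"
  have Bfin: "B < \<infinity>" unfolding B_def using BF(1) BG(1) by (simp add: ennreal_mult_less_top)
  have bound: "(\<integral>\<^sup>+\<omega>. (\<integral>\<^sup>+t\<in>{0..T}. ennreal (\<bar>K t (X \<omega> t)\<bar> powr 2) \<partial>lborel) \<partial>P) \<le> B"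
    if P: "P \<in> Ps" for P
  proof -
    have sp: "space P = Omega T S0 Sig0 A0" and ss: "sets P = path_events T (Omega T S0 Sig0 A0)"
      using models P by auto
    have PF: "Phi T 4 F \<in> borel_measurable (P \<Otimes>\<^sub>M lborel)" by (rule Phi_meas[OF T ss sp mF])
    have PG: "Phi T 4 G \<in> borel_measurable (P \<Otimes>\<^sub>M lborel)" by (rule Phi_meas[OF T ss sp mG])
    have PFi: "(\<lambda>t. Phi T 4 F (\<omega>, t)) \<in> borel_measurable lborel" if "\<omega> \<in> space P" for \<omega>
      by (rule measurable_Pair2[OF PF that])
    have PGi: "(\<lambda>t. Phi T 4 G (\<omega>, t)) \<in> borel_measurable lborel" if "\<omega> \<in> space P" for \<omega>
      by (rule measurable_Pair2[OF PG that])
    have PFo: "(\<lambda>\<omega>. \<integral>\<^sup>+t. Phi T 4 F (\<omega>, t) \<partial>lborel) \<in> borel_measurable P"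
      by (rule lborel.borel_measurable_nn_integral) (simp add: PF)
    have PGo: "(\<lambda>\<omega>. \<integral>\<^sup>+t. Phi T 4 G (\<omega>, t) \<partial>lborel) \<in> borel_measurable P"
      by (rule lborel.borel_measurable_nn_integral) (simp add: PG)
    have AEeq: "AE \<omega> in P. (\<integral>\<^sup>+t\<in>{0..T}. ennreal (\<bar>h t (X \<omega> t)\<bar> powr r) \<partial>lborel)
                 = (\<integral>\<^sup>+t. Phi T r h (\<omega>, t) \<partial>lborel)" for h r
      using AE_space pos[rule_format, OF P]
    proof eventually_elim
      case (elim \<omega>)
      thus ?case using inner_eq[OF T, of \<omega> S0 Sig0 A0 h r] sp by auto
    qed
    have "(\<integral>\<^sup>+\<omega>. (\<integral>\<^sup>+t\<in>{0..T}. ennreal (\<bar>K t (X \<omega> t)\<bar> powr 2) \<partial>lborel) \<partial>P)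
        = (\<integral>\<^sup>+\<omega>. (\<integral>\<^sup>+t. Phi T 2 K (\<omega>, t) \<partial>lborel) \<partial>P)"
      by (rule nn_integral_cong_AE[OF AEeq])
    also have "\<dots> \<le> (\<integral>\<^sup>+\<omega>. (\<integral>\<^sup>+t. ennreal (2*c1^2) * Phi T 4 F (\<omega>, t) + ennreal (2*c2^2) * Phi T 4 G (\<omega>, t) \<partial>lborel) \<partial>P)"
      unfolding K_def by (intro nn_integral_mono Phi_comb c)
    also have "\<dots> = (\<integral>\<^sup>+\<omega>. ennreal (2*c1^2) * (\<integral>\<^sup>+t. Phi T 4 F (\<omega>, t) \<partial>lborel)
                        + ennreal (2*c2^2) * (\<integral>\<^sup>+t. Phi T 4 G (\<omega>, t) \<partial>lborel) \<partial>P)"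
    proof (intro nn_integral_cong)
      fix \<omega> assume w: "\<omega> \<in> space P"
      note m1[measurable] = PFi[OF w] and m2[measurable] = PGi[OF w]
      have "(\<integral>\<^sup>+t. ennreal (2*c1^2) * Phi T 4 F (\<omega>, t) + ennreal (2*c2^2) * Phi T 4 G (\<omega>, t) \<partial>lborel)
          = (\<integral>\<^sup>+t. ennreal (2*c1^2) * Phi T 4 F (\<omega>, t) \<partial>lborel) + (\<integral>\<^sup>+t. ennreal (2*c2^2) * Phi T 4 G (\<omega>, t) \<partial>lborel)"
        by (rule nn_integral_add) measurable
      also have "\<dots> = ennreal (2*c1^2) * (\<integral>\<^sup>+t. Phi T 4 F (\<omega>, t) \<partial>lborel)
                        + ennreal (2*c2^2) * (\<integral>\<^sup>+t. Phi T 4 G (\<omega>, t) \<partial>lborel)"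
        by (simp add: nn_integral_cmult)
      finally show "(\<integral>\<^sup>+t. ennreal (2*c1^2) * Phi T 4 F (\<omega>, t) + ennreal (2*c2^2) * Phi T 4 G (\<omega>, t) \<partial>lborel)
          = ennreal (2*c1^2) * (\<integral>\<^sup>+t. Phi T 4 F (\<omega>, t) \<partial>lborel)
                        + ennreal (2*c2^2) * (\<integral>\<^sup>+t. Phi T 4 G (\<omega>, t) \<partial>lborel)" .
    qed
    also have "\<dots> = ennreal (2*c1^2) * (\<integral>\<^sup>+\<omega>. (\<integral>\<^sup>+t. Phi T 4 F (\<omega>, t) \<partial>lborel) \<partial>P)
                   + ennreal (2*c2^2) * (\<integral>\<^sup>+\<omega>. (\<integral>\<^sup>+t. Phi T 4 G (\<omega>, t) \<partial>lborel) \<partial>P)"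
    proof -
      note PFo[measurable] PGo[measurable]
      show ?thesis by (subst nn_integral_add) (measurable, simp add: nn_integral_cmult)
    qed
    also have "(\<integral>\<^sup>+\<omega>. (\<integral>\<^sup>+t. Phi T 4 F (\<omega>, t) \<partial>lborel) \<partial>P)
        = (\<integral>\<^sup>+\<omega>. (\<integral>\<^sup>+t\<in>{0..T}. ennreal (\<bar>F t (X \<omega> t)\<bar> powr 4) \<partial>lborel) \<partial>P)"
      by (rule nn_integral_cong_AE[OF AEeq, symmetric])
    also have "(\<integral>\<^sup>+\<omega>. (\<integral>\<^sup>+t. Phi T 4 G (\<omega>, t) \<partial>lborel) \<partial>P)
        = (\<integral>\<^sup>+\<omega>. (\<integral>\<^sup>+t\<in>{0..T}. ennreal (\<bar>G t (X \<omega> t)\<bar> powr 4) \<partial>lborel) \<partial>P)"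
      by (rule nn_integral_cong_AE[OF AEeq, symmetric])
    also have "ennreal (2*c1^2) * (\<integral>\<^sup>+\<omega>. (\<integral>\<^sup>+t\<in>{0..T}. ennreal (\<bar>F t (X \<omega> t)\<bar> powr 4) \<partial>lborel) \<partial>P)
             + ennreal (2*c2^2) * (\<integral>\<^sup>+\<omega>. (\<integral>\<^sup>+t\<in>{0..T}. ennreal (\<bar>G t (X \<omega> t)\<bar> powr 4) \<partial>lborel) \<partial>P)
             \<le> B"
      unfolding B_def using BF(2) BG(2) P by (intro add_mono mult_left_mono) auto
    finally show ?thesis .
  qed
  show ?thesis unfolding Lp_def using mK bound Bfin unfolding K_def by blast
qed

theorem proposition5p12:
  fixes T S0 Sig0 A0 Sl Sh TC :: real
    and \<alpha> \<beta> \<gamma> \<delta> :: coef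
    and C :: fun3 and V :: fun5 and w :: fun5
    and U :: "real \<Rightarrow> real"
    and Psi :: vec4
    and Pset :: "path measure set"
    and zetaP :: "path measure \<Rightarrow> real \<Rightarrow> path \<Rightarrow> vec4"
    and nul nuh sigl sigh etal etah xih KV Kw :: real
  assumes T_pos: "0 < T" and S0_pos: "0 < S0"
    and Sig_bounds: "0 < Sl" "Sl < Sig0" "Sig0 < Sh"
    and Psi_pos: "0 < fst Psi" "0 < fst (snd Psi)" "0 < fst (snd (snd Psi))" "0 < snd (snd (snd Psi))"
    \<comment> \<open>models: probability measures on (Omega, F), with characteristics zetaP\<close>
    and models: "\<forall>P\<in>Pset. prob_space P \<and> space P = Omega T S0 Sig0 A0
                   \<and> sets P = path_events T (Omega T S0 Sig0 A0)"
    and P00_pos: "\<forall>P\<in>Pset. AE \<omega> in P. \<forall>t\<in>{0..T}. 0 < S_of \<omega> t \<and> 0 < Sig_of \<omega> t"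
    and P00_drift: "\<forall>P\<in>Pset. AE \<omega> in P. AE t in lborel. t \<in> {0..T} \<longrightarrow>
                      0 \<le> snd (snd (snd (zetaP P t \<omega>)))
                      \<and> bC C t (S_of \<omega> t) (Sig_of \<omega> t) (zetaP P t \<omega>) = 0"
    \<comment> \<open>Assumption (A)(b)\<close>
    and const_bounds: "nul < 0" "0 < nuh" "0 < sigl" "sigl < Sl" "Sh < sigh" "etal < 0" "0 < etah" "0 < xih"
    and Ab_bounds: "\<forall>P\<in>Pset. AE \<omega> in P. AE t in lborel. t \<in> {0..T} \<longrightarrow>
         (case zetaP P t \<omega> of (\<nu>, \<sigma>, \<eta>, \<xi>) \<Rightarrow>
            nul \<le> \<nu> \<and> \<nu> \<le> nuh \<and> sigl \<le> \<sigma> \<and> \<sigma> \<le> sigh \<and> etal \<le> \<eta> \<and> \<eta> \<le> etah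
            \<and> 0 \<le> \<xi> \<and> \<xi> \<le> xih)
         \<and> Sl \<le> Sig_of \<omega> t \<and> Sig_of \<omega> t \<le> Sh"
    and reference_model: "\<exists>P\<in>Pset. AE \<omega> in P. AE t in lborel. t \<in> {0..T} \<longrightarrow>
                            zetaP P t \<omega> = zeta0 (Sig_of \<omega> t)"
    and candidate_family: "\<exists>psi0 Ppsi K0. 0 < psi0 \<and> psi0 < 1 \<and> Lp 4 T Pset K0 \<and>
         (\<forall>psi\<in>{0<..<psi0}. Ppsi psi \<in> Pset \<and>
            (AE \<omega> in Ppsi psi. AE t in lborel. t \<in> {0..T} \<longrightarrow>
               norm (zetaP (Ppsi psi) t \<omega> -
                 (case X \<omega> t of (S, A, M, Sg) \<Rightarrow> zeta_psi Psi C V \<beta> \<gamma> Sl Sh psi t S A M Sg))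
               \<le> K0 t (X \<omega> t) * psi\<^sup>2))"
    \<comment> \<open>Assumption (A)(c)\<close>
    and TC: "T \<le> TC"
    and C_smooth: "C122 C {(t,S,Sg). 0 < t \<and> t < TC \<and> 0 < S \<and> 0 < Sg}"
    and C_cont: "cont3 C (closure {(t,S,Sg). 0 < t \<and> t < TC \<and> 0 < S \<and> 0 < Sg})"
    and C_pde: "\<forall>t S Sg. 0 < t \<and> t < TC \<and> 0 < S \<and> Sl \<le> Sg \<and> Sg \<le> Sh \<longrightarrow>
                   ct C t S Sg + Sg\<^sup>2 * S\<^sup>2 * cS (cS C) t S Sg / 2 = 0"
    and C_vega: "\<exists>KC. Lp 2 T Pset KC \<and>
         (\<forall>(t,S,A,M,Sg)\<in>DD T Sl Sh. cSig C t S Sg \<noteq> 0 \<and>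
            \<bar>cSig (cSig C) t S Sg\<bar> \<le> KC t (S,A,M,Sg) *
               (\<bar>cSig C t S Sg\<bar> + \<bar>S\<^sup>2 * cS (cS C) t S Sg\<bar> + \<bar>S * cSig (cS C) t S Sg\<bar>))"
    \<comment> \<open>Assumption (A)(d)\<close>
    and V_smooth: "C12212 V (D0 T)" and V_cont: "cont5 V (closure (D0 T))"
    and V_pde: "\<forall>(t,S,A,M,Sg)\<in>DD T Sl Sh.
         pt V t S A M Sg + (\<alpha> t S A M + \<beta> t S A M * Sg\<^sup>2 / 2) * pA V t S A M Sg
         + Sg\<^sup>2 * S\<^sup>2 * Gam V \<gamma> t S A M Sg / 2 = 0"
    and V_bdry: "\<forall>(t,S,A,M,Sg)\<in>DD T Sl Sh. M \<le> S \<longrightarrow>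
         \<delta> t S A M * pA V t S A M Sg + pM V t S A M Sg = 0"
    and V_bounds: "\<forall>(t,S,A,M,Sg)\<in>DD T Sl Sh.
         \<bar>pSig V t S A M Sg\<bar> \<le> KV \<and>
         \<bar>\<beta> t S A M * pA V t S A M Sg + S\<^sup>2 * Gam V \<gamma> t S A M Sg\<bar> \<le> KV \<and>
         \<bar>S * dDelta_dSig V \<gamma> t S A M Sg\<bar> \<le> KV \<and>
         \<bar>pSig (pSig V) t S A M Sg\<bar> \<le> KV"
    \<comment> \<open>Assumption (A)(e)\<close>
    and w_smooth: "C12212 w (D0 T)" and w_cont: "cont5 w (closure (D0 T))"
    and w_pde: "\<forall>(t,S,A,M,Sg)\<in>DD T Sl Sh.
         pt w t S A M Sg + (\<alpha> t S A M + \<beta> t S A M * Sg\<^sup>2 / 2) * pA w t S A M Sg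
         + Sg\<^sup>2 * S\<^sup>2 * Gam w \<gamma> t S A M Sg / 2 + gtilde Psi C V \<beta> \<gamma> t S A M Sg / 2 = 0"
    and w_bdry: "\<forall>(t,S,A,M,Sg)\<in>DD T Sl Sh. M \<le> S \<longrightarrow>
         \<delta> t S A M * pA w t S A M Sg + pM w t S A M Sg = 0"
    and w_term: "\<forall>S A M Sg. 0 < S \<and> 0 < M \<and> Sl \<le> Sg \<and> Sg \<le> Sh \<longrightarrow> w T S A M Sg = 0"
    and w_bounds: "\<forall>(t,S,A,M,Sg)\<in>DD T Sl Sh. 0 \<le> w t S A M Sg \<and> w t S A M Sg \<le> Kw"
    and w_L4: "Lp 4 T Pset (\<lambda>t (S,A,M,Sg). pSig w t S A M Sg)"
              "Lp 4 T Pset (\<lambda>t (S,A,M,Sg). S * Delta w \<gamma> t S A M Sg)"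
              "Lp 4 T Pset (\<lambda>t (S,A,M,Sg). \<beta> t S A M * pA w t S A M Sg + S\<^sup>2 * Gam w \<gamma> t S A M Sg)"
              "Lp 4 T Pset (\<lambda>t (S,A,M,Sg). S * dDelta_dSig w \<gamma> t S A M Sg)"
              "Lp 4 T Pset (\<lambda>t (S,A,M,Sg). pSig (pSig w) t S A M Sg)"
    \<comment> \<open>Assumption (A)(f)\<close>
    and U_C3: "\<forall>k<3. \<forall>y. ((deriv ^^ k) U) differentiable (at y)"
              "continuous_on UNIV ((deriv ^^ 3) U)"
    and U_incr: "\<forall>y. deriv U y > 0" and U_conc: "\<forall>y. deriv (deriv U) y < 0"
    and U_dara: "\<forall>x y. x \<le> y \<longrightarrow>
                    - deriv (deriv U) y / deriv U y \<le> - deriv (deriv U) x / deriv U x"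
  shows "\<exists>K4. (\<forall>t x. 0 \<le> K4 t x) \<and> Lp 2 T Pset K4 \<and>
     (\<forall>t S A M Sg y \<theta> \<phi> \<nu> \<sigma> \<eta> \<xi> psi.
        (t,S,A,M,Sg) \<in> DD T Sl Sh \<and>
        nul \<le> \<nu> \<and> \<nu> \<le> nuh \<and> sigl \<le> \<sigma> \<and> \<sigma> \<le> sigh \<and> etal \<le> \<eta> \<and> \<eta> \<le> etah
        \<and> 0 \<le> \<xi> \<and> \<xi> \<le> xih \<and> 0 < psi \<longrightarrow>
        H4 U V C \<gamma> w psi t S A M Sg y (\<theta>, \<phi>) (\<nu>, \<sigma>, \<eta>, \<xi>)
          \<ge> deriv (deriv U) y * K4 t (S,A,M,Sg) * psi\<^sup>2)"
  proof -
  define c1 where "c1 = sigh^2"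
  define c2 where "c2 = etal^2 + etah^2 + xih"
  define F :: "real \<Rightarrow> real \<times> real \<times> real \<times> real \<Rightarrow> real"
    where "F = (\<lambda>t (S,A,M,Sg). S * Delta w \<gamma> t S A M Sg)"
  define G :: "real \<Rightarrow> real \<times> real \<times> real \<times> real \<Rightarrow> real"
    where "G = (\<lambda>t (S,A,M,Sg). pSig w t S A M Sg)"
  define K4 where "K4 = (\<lambda>t x. c1 * (F t x)^2 + c2 * (G t x)^2)"
  have c: "0 \<le> c1" "0 \<le> c2" using const_bounds unfolding c1_def c2_def by auto
  have models': "\<forall>P\<in>Pset. space P = Omega T S0 Sig0 A0 \<and> sets P = path_events T (Omega T S0 Sig0 A0)"
    using models by auto
  have LK: "Lp 2 T Pset K4"
    unfolding K4_def F_def G_def by (rule Lp_comb[OF T_pos models' P00_pos w_L4(2) w_L4(1) c])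
  have U3: "deriv (deriv (deriv U)) y \<ge> 0" for y
    by (rule U3_nonneg[OF U_C3(1) U_incr U_dara])
  show ?thesis
  proof (intro exI[of _ K4] conjI allI impI LK)
    fix t x show "0 \<le> K4 t x" unfolding K4_def using c by simp
  next
    fix t S A M Sg y \<theta> \<phi> \<nu> \<sigma> \<eta> \<xi> psi :: real
    assume H: "(t,S,A,M,Sg) \<in> DD T Sl Sh \<and>
        nul \<le> \<nu> \<and> \<nu> \<le> nuh \<and> sigl \<le> \<sigma> \<and> \<sigma> \<le> sigh \<and> etal \<le> \<eta> \<and> \<eta> \<le> etah
        \<and> 0 \<le> \<xi> \<and> \<xi> \<le> xih \<and> 0 < psi"
    have w0: "0 \<le> w t S A M Sg" using w_bounds H by auto
    define W where "W = deriv (deriv U) y - deriv (deriv (deriv U)) y * w t S A M Sg * psi"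
    have Wu: "W \<le> deriv (deriv U) y" unfolding W_def using U3[of y] w0 H
      by (simp add: mult_nonneg_nonneg)
    define a where "a = \<sigma> * S * (pS w t S A M Sg + \<gamma> t S A M * pA w t S A M Sg)"
    define b where "b = pSig w t S A M Sg"
    have aeq: "a = \<sigma> * (S * Delta w \<gamma> t S A M Sg)" unfolding a_def Delta_def by simp
    have qK: "qf \<eta> \<xi> (a,b) (a,b) \<le> 2 * K4 t (S,A,M,Sg)"
      unfolding aeq K4_def F_def G_def c1_def c2_def b_def prod.case
      by (rule qf_bound) (use H const_bounds in auto)
    have "- (W/2) * qf \<eta> \<xi> (\<sigma> * S * (\<theta> - (Delta V \<gamma> t S A M Sg - \<phi> * cS C t S Sg)),
                \<phi> * cSig C t S Sg - pSig V t S A M Sg) (\<sigma> * S * (\<theta> - (Delta V \<gamma> t S A M Sg - \<phi> * cS C t S Sg)),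
                \<phi> * cSig C t S Sg - pSig V t S A M Sg)
          + psi * deriv (deriv U) y * qf \<eta> \<xi> (a,b) (\<sigma> * S * (\<theta> - (Delta V \<gamma> t S A M Sg - \<phi> * cS C t S Sg)),
                \<phi> * cSig C t S Sg - pSig V t S A M Sg)
        \<ge> deriv (deriv U) y * K4 t (S,A,M,Sg) * psi^2"
      by (rule key_ineq[OF Wu U_conc[rule_format] _ _ qK]) (use H in auto)
    thus "H4 U V C \<gamma> w psi t S A M Sg y (\<theta>, \<phi>) (\<nu>, \<sigma>, \<eta>, \<xi>)
          \<ge> deriv (deriv U) y * K4 t (S,A,M,Sg) * psi\<^sup>2"
      unfolding H4_def Let_def prod.case W_def a_def b_def .
  qed
qed

end
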